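(* If $\mathbf A=\langle A,\vee,0,\mathscr F\rangle$ is a semilattice with operators, then $\operatorname{Con}\mathbf A\cong\operatorname{Don}\mathbf A\cong\operatorname{Eon}\mathbf A$.
   Context: A semilattice with operators is a join semilattice with least element $0$ together with a set $\mathscr F$ of unary maps each preserving $\vee$ and $0$. A relation on $A$ is compatible if it is compatible with $\vee$ and with every $f\in\mathscr F$. $\operatorname{Con}\mathbf A$ is the lattice of congruences. $\operatorname{Don}\mathbf A$ is the lattice (under inclusion) of all reflexive, transitive, compatible relations $R$ such that $x\ge y$ implies $x\,R\,y$. $\operatorname{Eon}\mathbf A$ is the lattice of all reflexive, transitive, compatible relations $R$ such that (1) $x\,R\,y$ implies $x\le y$, and (2) if $x\le y\le z$ and $x\,R\,z$ then $x\,R\,y$. *)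

theory Defs
  imports Main
begin

text \<open>A semilattice with operators: the join semilattice with least element is the type
  'a of class bounded_semilattice_sup_bot (join = sup, 0 = bot, order: x \<le> y iff sup x y = y);
  the set of operators is F, each preserving join and 0.\<close>

definition operators :: "('a::bounded_semilattice_sup_bot \<Rightarrow> 'a) set \<Rightarrow> bool" where
  "operators F \<longleftrightarrow> (\<forall>f\<in>F. (\<forall>x y. f (sup x y) = sup (f x) (f y)) \<and> f bot = bot)"

definition compatible :: "('a::bounded_semilattice_sup_bot \<Rightarrow> 'a) set \<Rightarrow> 'a rel \<Rightarrow> bool" where
  "compatible F R \<longleftrightarrow>
     (\<forall>x y u v. (x, y) \<in> R \<and> (u, v) \<in> R \<longrightarrow> (sup x u, sup y v) \<in> R) \<and>
     (\<forall>f\<in>F. \<forall>x y. (x, y) \<in> R \<longrightarrow> (f x, f y) \<in> R)"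

definition Con :: "('a::bounded_semilattice_sup_bot \<Rightarrow> 'a) set \<Rightarrow> 'a rel set" where
  "Con F = {R. refl R \<and> sym R \<and> trans R \<and> compatible F R}"

definition Don :: "('a::bounded_semilattice_sup_bot \<Rightarrow> 'a) set \<Rightarrow> 'a rel set" where
  "Don F = {R. refl R \<and> trans R \<and> compatible F R \<and> (\<forall>x y. y \<le> x \<longrightarrow> (x, y) \<in> R)}"

definition Eon :: "('a::bounded_semilattice_sup_bot \<Rightarrow> 'a) set \<Rightarrow> 'a rel set" where
  "Eon F = {R. refl R \<and> trans R \<and> compatible F R \<and>
               (\<forall>x y. (x, y) \<in> R \<longrightarrow> x \<le> y) \<and>
               (\<forall>x y z. x \<le> y \<and> y \<le> z \<and> (x, z) \<in> R \<longrightarrow> (x, y) \<in> R)}"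

text \<open>Isomorphism of the lattices (collections of relations ordered by inclusion):
  an order isomorphism, i.e. a bijection preserving and reflecting inclusion.
  For lattices, order isomorphisms are exactly lattice isomorphisms.\<close>

definition incl_iso :: "'a rel set \<Rightarrow> 'a rel set \<Rightarrow> bool" where
  "incl_iso L M \<longleftrightarrow> (\<exists>h. bij_betw h L M \<and> (\<forall>R\<in>L. \<forall>S\<in>L. R \<subseteq> S \<longleftrightarrow> h R \<subseteq> h S))"

end

theory Submission
  imports Defs
begin

lemma iso_lemma:
  assumes "\<And>R. R \<in> L \<Longrightarrow> g R \<in> M" "\<And>S. S \<in> M \<Longrightarrow> k S \<in> L"
    "\<And>R. R \<in> L \<Longrightarrow> k (g R) = R" "\<And>S. S \<in> M \<Longrightarrow> g (k S) = S"
    "\<And>R S. R \<subseteq> S \<Longrightarrow> g R \<subseteq> g S" "\<And>R S. R \<subseteq> S \<Longrightarrow> k R \<subseteq> k S"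
  shows "incl_iso L M"
  unfolding incl_iso_def
proof (intro exI conjI ballI)
  show "bij_betw g L M" by (rule bij_betw_byWitness[where f'=k]) (use assms in auto)
  fix R S assume "R \<in> L" "S \<in> L"
  show "R \<subseteq> S \<longleftrightarrow> g R \<subseteq> g S"
    using assms(5)[of R S] assms(6)[of "g R" "g S"] assms(3)[OF \<open>R\<in>L\<close>] assms(3)[OF \<open>S\<in>L\<close>] by auto
qed

definition DD :: "'a::bounded_semilattice_sup_bot rel \<Rightarrow> 'a rel" where
  "DD T = {(x,y). (x, sup x y) \<in> T}"

lemma op_mono:
  assumes "operators F" "f \<in> F" "(x::'a::bounded_semilattice_sup_bot) \<le> y" shows "f x \<le> f y"
proof -
  have "f y = f (sup x y)" using assms(3) by (simp add: sup_absorb2)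
  also have "\<dots> = sup (f x) (f y)" using assms(1,2) unfolding operators_def by blast
  finally show ?thesis by (metis sup.cobounded1)
qed

lemma op_sup: "operators F \<Longrightarrow> f \<in> F \<Longrightarrow> f (sup x y) = sup (f x) (f y)"
  unfolding operators_def by blast

lemma compI:
  assumes "\<And>x y u v. (x, y) \<in> R \<Longrightarrow> (u, v) \<in> R \<Longrightarrow> (sup x u, sup y v) \<in> R"
    "\<And>f x y. f \<in> F \<Longrightarrow> (x, y) \<in> R \<Longrightarrow> (f x, f y) \<in> R"
  shows "compatible F R" using assms unfolding compatible_def by blast

lemma compS: "compatible F R \<Longrightarrow> (x, y) \<in> R \<Longrightarrow> (u, v) \<in> R \<Longrightarrow> (sup x u, sup y v) \<in> R"
  unfolding compatible_def by blast
lemma compF: "compatible F R \<Longrightarrow> f \<in> F \<Longrightarrow> (x, y) \<in> R \<Longrightarrow> (f x, f y) \<in> R"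
  unfolding compatible_def by blast

lemma Don_key:
  assumes "R \<in> Don F" shows "(x, sup x y) \<in> R \<longleftrightarrow> (x, y) \<in> R"
proof
  have r: "refl R" "trans R" "compatible F R" "\<And>x y. y \<le> x \<Longrightarrow> (x, y) \<in> R"
    using assms unfolding Don_def by auto
  { assume "(x, sup x y) \<in> R"
    moreover have "(sup x y, y) \<in> R" using r(4) by simp
    ultimately show "(x, y) \<in> R" using r(2) by (meson transD) }
  { assume "(x, y) \<in> R"
    moreover have "(x, x) \<in> R" using r(1) by (simp add: refl_on_def)
    ultimately have "(sup x x, sup x y) \<in> R" using compS[OF r(3)] by blast
    thus "(x, sup x y) \<in> R" by simp }
qed

lemma DD_Don: assumes "R \<in> Don F" shows "DD R = R"
  using Don_key[OF assms] unfolding DD_def by auto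

lemma DD_Con: assumes "operators F" "T \<in> Con F" shows "DD T \<in> Don F"
proof -
  have r: "refl T" "sym T" "trans T" "compatible F T" using assms unfolding Con_def by auto
  have rf: "\<And>a. (a,a) \<in> T" using r(1) by (simp add: refl_on_def)
  have tr: "\<And>a b c. (a,b) \<in> T \<Longrightarrow> (b,c) \<in> T \<Longrightarrow> (a,c) \<in> T" using r(3) by (meson transD)
  have sy: "\<And>a b. (a,b) \<in> T \<Longrightarrow> (b,a) \<in> T" using r(2) by (meson symD)
  have "refl (DD T)" unfolding DD_def refl_on_def using rf by auto
  moreover have "trans (DD T)"
  proof (rule transI)
    fix x y z assume "(x,y) \<in> DD T" "(y,z) \<in> DD T"
    hence a: "(x, sup x y) \<in> T" "(y, sup y z) \<in> T" unfolding DD_def by auto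
    have b: "(sup x z, sup (sup x y) z) \<in> T" using compS[OF r(4) a(1) rf[of z]] .
    have c: "(sup x y, sup x (sup y z)) \<in> T" using compS[OF r(4) rf[of x] a(2)] .
    have "sup (sup x y) z = sup x (sup y z)" by (simp add: sup_assoc)
    hence "(x, sup x (sup y z)) \<in> T" using tr[OF a(1) c] by simp
    moreover have "(sup x (sup y z), sup x z) \<in> T" using sy[OF b] by (simp add: sup_assoc)
    ultimately show "(x,z) \<in> DD T" unfolding DD_def using tr by auto
  qed
  moreover have "compatible F (DD T)"
  proof (rule compI)
    fix x y u v assume "(x,y) \<in> DD T" "(u,v) \<in> DD T"
    hence "(sup x u, sup (sup x y) (sup u v)) \<in> T" unfolding DD_def using compS[OF r(4)] by auto
    thus "(sup x u, sup y v) \<in> DD T" unfolding DD_def by (simp add: ac_simps)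
  next
    fix f x y assume "f \<in> F" "(x,y) \<in> DD T"
    thus "(f x, f y) \<in> DD T" unfolding DD_def using compF[OF r(4)] op_sup[OF assms(1)] by fastforce
  qed
  moreover have "\<And>x y. y \<le> x \<Longrightarrow> (x,y) \<in> DD T" unfolding DD_def using rf by (simp add: sup_absorb1)
  ultimately show ?thesis unfolding Don_def by auto
qed

definition CC :: "'a rel \<Rightarrow> 'a rel" where "CC R = R \<inter> R\<inverse>"

lemma CC_Don: assumes "R \<in> Don F" shows "CC R \<in> Con F"
proof -
  have r: "refl R" "trans R" "compatible F R" using assms unfolding Don_def by auto
  have "refl (CC R)" using r(1) unfolding CC_def refl_on_def by auto
  moreover have "sym (CC R)" unfolding CC_def sym_def by auto
  moreover have "trans (CC R)" using r(2) unfolding CC_def trans_def by blast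
  moreover have "compatible F (CC R)" unfolding CC_def
    by (rule compI) (auto intro: compS[OF r(3)] compF[OF r(3)])
  ultimately show ?thesis unfolding Con_def by auto
qed

lemma CC_DD: assumes "T \<in> Con F" shows "CC (DD T) = T"
proof -
  have r: "refl T" "sym T" "trans T" "compatible F T" using assms unfolding Con_def by auto
  have rf: "\<And>a. (a,a) \<in> T" using r(1) by (simp add: refl_on_def)
  have tr: "\<And>a b c. (a,b) \<in> T \<Longrightarrow> (b,c) \<in> T \<Longrightarrow> (a,c) \<in> T" using r(3) by (meson transD)
  have sy: "\<And>a b. (a,b) \<in> T \<Longrightarrow> (b,a) \<in> T" using r(2) by (meson symD)
  show ?thesis
  proof (intro set_eqI iffI)
    fix p assume "p \<in> CC (DD T)"
    then obtain x y where p: "p = (x,y)" "(x, sup x y) \<in> T" "(y, sup y x) \<in> T"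
      unfolding CC_def DD_def by auto
    thus "p \<in> T" using tr[OF p(2)] sy by (simp add: sup_commute)
  next
    fix p assume "p \<in> T"
    then obtain x y where p: "p = (x,y)" "(x,y) \<in> T" by (cases p) auto
    have "(sup x x, sup x y) \<in> T" using compS[OF r(4) rf p(2)] .
    moreover have "(sup y y, sup y x) \<in> T" using compS[OF r(4) rf sy[OF p(2)]] .
    ultimately show "p \<in> CC (DD T)" unfolding CC_def DD_def p by auto
  qed
qed

lemma DD_CC: assumes "R \<in> Don F" shows "DD (CC R) = R"
proof -
  have "\<And>x y. (sup x y, x) \<in> R" using assms unfolding Don_def by auto
  thus ?thesis using Don_key[OF assms] unfolding DD_def CC_def by auto
qed

definition EE :: "'a::bounded_semilattice_sup_bot rel \<Rightarrow> 'a rel" where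
  "EE R = {(x,y). x \<le> y \<and> (x,y) \<in> R}"

lemma EE_Don: assumes "operators F" "R \<in> Don F" shows "EE R \<in> Eon F"
proof -
  have r: "refl R" "trans R" "compatible F R" "\<And>x y. y \<le> x \<Longrightarrow> (x, y) \<in> R"
    using assms unfolding Don_def by auto
  have "refl (EE R)" using r(1) unfolding EE_def refl_on_def by auto
  moreover have "trans (EE R)" using r(2) unfolding EE_def trans_def by (blast intro: order_trans)
  moreover have "compatible F (EE R)" unfolding EE_def
    by (rule compI) (auto intro: compS[OF r(3)] compF[OF r(3)] sup_mono op_mono[OF assms(1)] le_supI1 le_supI2)
  moreover have "\<forall>x y z. x \<le> y \<and> y \<le> z \<and> (x, z) \<in> EE R \<longrightarrow> (x, y) \<in> EE R"
    unfolding EE_def using r(2,4) by (auto dest: transD)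
  ultimately show ?thesis unfolding Eon_def EE_def by auto
qed

lemma DD_Eon: assumes "operators F" "T \<in> Eon F" shows "DD T \<in> Don F"
proof -
  have r: "refl T" "trans T" "compatible F T" "\<And>x y. (x, y) \<in> T \<Longrightarrow> x \<le> y"
     "\<And>x y z. x \<le> y \<Longrightarrow> y \<le> z \<Longrightarrow> (x, z) \<in> T \<Longrightarrow> (x, y) \<in> T"
    using assms(2) unfolding Eon_def mem_Collect_eq by blast+
  have rf: "\<And>a. (a,a) \<in> T" using r(1) by (simp add: refl_on_def)
  have tr: "\<And>a b c. (a,b) \<in> T \<Longrightarrow> (b,c) \<in> T \<Longrightarrow> (a,c) \<in> T" using r(2) by (meson transD)
  have "refl (DD T)" unfolding DD_def refl_on_def using rf by auto
  moreover have "trans (DD T)"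
  proof (rule transI)
    fix x y z assume "(x,y) \<in> DD T" "(y,z) \<in> DD T"
    hence a: "(x, sup x y) \<in> T" "(y, sup y z) \<in> T" unfolding DD_def by auto
    have c: "(sup x y, sup x (sup y z)) \<in> T" using compS[OF r(3) rf[of x] a(2)] .
    have d: "(x, sup x (sup y z)) \<in> T" using tr[OF a(1) c] .
    have e: "sup x z \<le> sup x (sup y z)" by (rule sup_mono) simp_all
    have f: "x \<le> sup x z" by (rule sup.cobounded1)
    have "(x, sup x z) \<in> T" by (rule r(5)[OF f e d])
    thus "(x,z) \<in> DD T" unfolding DD_def by auto
  qed
  moreover have "compatible F (DD T)"
  proof (rule compI)
    fix x y u v assume "(x,y) \<in> DD T" "(u,v) \<in> DD T"
    hence "(sup x u, sup (sup x y) (sup u v)) \<in> T" unfolding DD_def using compS[OF r(3)] by auto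
    thus "(sup x u, sup y v) \<in> DD T" unfolding DD_def by (simp add: ac_simps)
  next
    fix f x y assume "f \<in> F" "(x,y) \<in> DD T"
    thus "(f x, f y) \<in> DD T" unfolding DD_def using compF[OF r(3)] op_sup[OF assms(1)] by fastforce
  qed
  moreover have "\<And>x y. y \<le> x \<Longrightarrow> (x,y) \<in> DD T" unfolding DD_def using rf by (simp add: sup_absorb1)
  ultimately show ?thesis unfolding Don_def by auto
qed

lemma EE_DD: assumes "T \<in> Eon F" shows "EE (DD T) = T"
proof -
  have "\<And>x y. (x, y) \<in> T \<Longrightarrow> x \<le> y" using assms unfolding Eon_def mem_Collect_eq by blast
  thus ?thesis unfolding EE_def DD_def by (auto simp: sup_absorb2)
qed

lemma DD_EE: assumes "R \<in> Don F" shows "DD (EE R) = R"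
  using Don_key[OF assms] unfolding DD_def EE_def by auto

theorem lemma3p4:
  fixes F :: "('a::bounded_semilattice_sup_bot \<Rightarrow> 'a) set"
  assumes "operators F"
  shows "incl_iso (Con F) (Don F) \<and> incl_iso (Don F) (Eon F)"
proof
  show "incl_iso (Con F) (Don F)"
  proof (rule iso_lemma[where g=DD and k=CC])
    show "\<And>R. R \<in> Con F \<Longrightarrow> DD R \<in> Don F" using DD_Con[OF assms] .
    show "\<And>S. S \<in> Don F \<Longrightarrow> CC S \<in> Con F" using CC_Don .
    show "\<And>R. R \<in> Con F \<Longrightarrow> CC (DD R) = R" using CC_DD .
    show "\<And>S. S \<in> Don F \<Longrightarrow> DD (CC S) = S" using DD_CC .
    show "\<And>R S. R \<subseteq> S \<Longrightarrow> DD R \<subseteq> DD S" unfolding DD_def by auto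
    show "\<And>R S. R \<subseteq> S \<Longrightarrow> CC R \<subseteq> CC S" unfolding CC_def by auto
  qed
  show "incl_iso (Don F) (Eon F)"
  proof (rule iso_lemma[where g=EE and k=DD])
    show "\<And>R. R \<in> Don F \<Longrightarrow> EE R \<in> Eon F" using EE_Don[OF assms] .
    show "\<And>S. S \<in> Eon F \<Longrightarrow> DD S \<in> Don F" using DD_Eon[OF assms] .
    show "\<And>R. R \<in> Don F \<Longrightarrow> DD (EE R) = R" using DD_EE .
    show "\<And>S. S \<in> Eon F \<Longrightarrow> EE (DD S) = S" using EE_DD .
    show "\<And>R S. R \<subseteq> S \<Longrightarrow> EE R \<subseteq> EE S" unfolding EE_def by auto
    show "\<And>R S. R \<subseteq> S \<Longrightarrow> DD R \<subseteq> DD S" unfolding DD_def by auto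
  qed
qed

end
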